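(* Let $F$ be an infinite field (e.g. $\mathbb{R}$ or $\mathbb{C}$), let $V$ be a vector space over $F$, and let $n \ge 1$. Every valid widget with $n$ pairs in $V$ contains a legal subwidget.
   Context: A widget with $n$ pairs in $V$ is an indexed family of $n$ pairs of vectors $p_i=(p_i^+,p_i^-)$, $i=1,\dots,n$, in $V$ (the vectors $p_i^+,p_i^-$ are called the points of the pair $p_i$; each is called the opposite of the other). A section of a widget is a set of points containing at most one point from each pair. A widget with $n$ pairs is legal if every section spans a linear subspace of $V$ of dimension at most $n-1$. A widget with $n$ pairs is full if the linear span of all its $2n$ points has dimension at least $n$. A widget is valid if it is both legal and full. A subwidget of a widget with $n$ pairs is the widget formed by some $k$ of its pairs with $1\le k<n$ (a proper subset of the pairs); it is itself a widget with $k$ pairs, so it is legal if every one of its sections spans a subspace of dimension at most $k-1$, and full if its $2k$ points span a subspace of dimension at least $k$. *)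

theory Defs
  imports Complex_Main
begin

text \<open>A widget is a family p of pairs (p i = (p_i^+, p_i^-)) indexed by a finite index set I
  (for the whole widget I = {1..n}; a subwidget uses a nonempty proper subset of the indices).\<close>

definition widget_sections :: "(nat \<Rightarrow> 'b \<times> 'b) \<Rightarrow> nat set \<Rightarrow> 'b set set" where
  "widget_sections p I =
     {(\<lambda>i. if c i then fst (p i) else snd (p i)) ` S | S c. S \<subseteq> I}"

definition widget_legal :: "('a::field \<Rightarrow> 'b::ab_group_add \<Rightarrow> 'b) \<Rightarrow> (nat \<Rightarrow> 'b \<times> 'b) \<Rightarrow> nat set \<Rightarrow> bool" where
  "widget_legal scale p I \<longleftrightarrow>
     (\<forall>X \<in> widget_sections p I. vector_space.dim scale X \<le> card I - 1)"

definition widget_full :: "('a::field \<Rightarrow> 'b::ab_group_add \<Rightarrow> 'b) \<Rightarrow> (nat \<Rightarrow> 'b \<times> 'b) \<Rightarrow> nat set \<Rightarrow> bool" where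
  "widget_full scale p I \<longleftrightarrow>
     vector_space.dim scale (\<Union>i\<in>I. {fst (p i), snd (p i)}) \<ge> card I"

definition widget_valid :: "('a::field \<Rightarrow> 'b::ab_group_add \<Rightarrow> 'b) \<Rightarrow> (nat \<Rightarrow> 'b \<times> 'b) \<Rightarrow> nat set \<Rightarrow> bool" where
  "widget_valid scale p I \<longleftrightarrow> widget_legal scale p I \<and> widget_full scale p I"

end

theory Submission
  imports Defs
begin

definition wBB :: "(nat \<Rightarrow> 'b \<times> 'b) \<Rightarrow> nat set \<Rightarrow> (nat \<Rightarrow> bool) \<Rightarrow> nat \<Rightarrow> 'b set" where
  "wBB p K c i = (if i \<in> K then {if c i then fst (p i) else snd (p i)} else {fst (p i), snd (p i)})"


definition whall :: "('a::field \<Rightarrow> 'b::ab_group_add \<Rightarrow> 'b) \<Rightarrow> (nat \<Rightarrow> 'b \<times> 'b) \<Rightarrow> nat set \<Rightarrow> nat set \<Rightarrow> (nat \<Rightarrow> bool) \<Rightarrow> bool" where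
  "whall scale p I K c \<longleftrightarrow> (\<forall>J \<subseteq> I. card J \<le> vector_space.dim scale (\<Union>j\<in>J. wBB p K c j))"

context vector_space begin

lemma dim_mono_fin: assumes "finite T" "S \<subseteq> T" shows "dim S \<le> dim T"
proof -
  obtain A where A: "A \<subseteq> S" "independent A" "S \<subseteq> span A" "card A = dim S"
    by (rule basis_exists)
  have AT: "A \<subseteq> T" using A(1) assms(2) by blast
  obtain B where B: "A \<subseteq> B" "B \<subseteq> T" "independent B" "T \<subseteq> span B"
    by (rule maximal_independent_subset_extend[OF AT A(2)])
  have "card B = dim T" by (rule basis_card_eq_dim[OF B(2) B(4) B(3)])
  moreover have fB: "finite B" using B(2) assms(1) by (rule finite_subset)
  then have "card A \<le> card B" using B(1) by (rule card_mono)
  ultimately show ?thesis using A by simp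
qed

lemma dim_submod: assumes "finite A" "finite B"
  shows "dim (A \<union> B) + dim (A \<inter> B) \<le> dim A + dim B"
proof -
  obtain C where C: "C \<subseteq> A \<inter> B" "independent C" "A \<inter> B \<subseteq> span C" "card C = dim (A \<inter> B)"
    by (rule basis_exists)
  have CA: "C \<subseteq> A" "C \<subseteq> B" using C(1) by auto
  obtain D where D: "C \<subseteq> D" "D \<subseteq> A" "independent D" "A \<subseteq> span D"
    by (rule maximal_independent_subset_extend[OF CA(1) C(2)])
  obtain E where E: "C \<subseteq> E" "E \<subseteq> B" "independent E" "B \<subseteq> span E"
    by (rule maximal_independent_subset_extend[OF CA(2) C(2)])
  have cD: "card D = dim A" by (rule basis_card_eq_dim[OF D(2) D(4) D(3)])
  have cE: "card E = dim B" by (rule basis_card_eq_dim[OF E(2) E(4) E(3)])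
  have fD: "finite D" by (rule finite_subset[OF D(2) assms(1)])
  have fE: "finite E" by (rule finite_subset[OF E(2) assms(2)])
  have fDE: "finite (D \<union> E)" using fD fE by simp
  have s1: "span D \<subseteq> span (D \<union> E)" by (rule span_mono) simp
  have s2: "span E \<subseteq> span (D \<union> E)" by (rule span_mono) simp
  have "A \<union> B \<subseteq> span (D \<union> E)" using D(4) E(4) s1 s2 by blast
  then have "dim (A \<union> B) \<le> card (D \<union> E)" using fDE by (rule dim_le_card)
  moreover have "card (D \<union> E) + card (D \<inter> E) = card D + card E"
    by (rule card_Un_Int[OF fD fE, symmetric])
  moreover have "card C \<le> card (D \<inter> E)"
  proof (rule card_mono)
    show "finite (D \<inter> E)" using fD by simp
    show "C \<subseteq> D \<inter> E" using D(1) E(1) by simp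
  qed
  ultimately show ?thesis using C(4) cD cE by linarith
qed

lemma finite_UBB: "finite J \<Longrightarrow> finite (\<Union>j\<in>J. wBB p K c j)"
  by (auto simp: wBB_def)

lemma hall_step:
  fixes p :: "nat \<Rightarrow> 'b \<times> 'b"
  assumes I: "finite I" and K: "K \<subseteq> I" and i: "i \<in> I" "i \<notin> K" and h: "whall scale p I K c"
  shows "\<exists>b. whall scale p I (insert i K) (c(i:=b))"
proof (rule ccontr)
  assume "\<not> ?thesis"
  then obtain J1 J2 where J1: "J1 \<subseteq> I" "card J1 > dim (\<Union>j\<in>J1. wBB p (insert i K) (c(i:=True)) j)"
    and J2: "J2 \<subseteq> I" "card J2 > dim (\<Union>j\<in>J2. wBB p (insert i K) (c(i:=False)) j)"
    unfolding whall_def by (metis not_le)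
  define U1 where "U1 = (\<Union>j\<in>J1. wBB p (insert i K) (c(i:=True)) j)"
  define U2 where "U2 = (\<Union>j\<in>J2. wBB p (insert i K) (c(i:=False)) j)"
  have fJ: "finite J1" "finite J2" using finite_subset[OF J1(1) I] finite_subset[OF J2(1) I] by auto
  have e1: "\<And>j. j \<noteq> i \<Longrightarrow> wBB p (insert i K) (c(i:=b)) j = wBB p K c j" for b
    by (auto simp: wBB_def)
  have iJ1: "i \<in> J1"
  proof (rule ccontr)
    assume "i \<notin> J1"
    then have eq: "U1 = (\<Union>j\<in>J1. wBB p K c j)" unfolding U1_def
      by (intro SUP_cong refl) (metis e1)
    have "card J1 \<le> dim (\<Union>j\<in>J1. wBB p K c j)" using h J1(1) unfolding whall_def by blast
    then show False using J1(2) eq unfolding U1_def by auto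
  qed
  have iJ2: "i \<in> J2"
  proof (rule ccontr)
    assume "i \<notin> J2"
    then have eq: "U2 = (\<Union>j\<in>J2. wBB p K c j)" unfolding U2_def
      by (intro SUP_cong refl) (metis e1)
    have "card J2 \<le> dim (\<Union>j\<in>J2. wBB p K c j)" using h J2(1) unfolding whall_def by blast
    then show False using J2(2) eq unfolding U2_def by auto
  qed
  have fU: "finite U1" "finite U2" unfolding U1_def U2_def using fJ by (auto simp: wBB_def)
  have s1: "(\<Union>j\<in>J1 \<union> J2. wBB p K c j) \<subseteq> U1 \<union> U2"
  proof
    fix x assume "x \<in> (\<Union>j\<in>J1 \<union> J2. wBB p K c j)"
    then obtain j where j: "j \<in> J1 \<union> J2" "x \<in> wBB p K c j" by blast
    show "x \<in> U1 \<union> U2"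
    proof (cases "j = i")
      case True
      then show ?thesis using j iJ1 iJ2 i unfolding U1_def U2_def wBB_def by auto
    next
      case False
      then show ?thesis using j e1[OF False] unfolding U1_def U2_def by blast
    qed
  qed
  have s2: "(\<Union>j\<in>(J1 \<inter> J2) - {i}. wBB p K c j) \<subseteq> U1 \<inter> U2"
  proof
    fix x assume "x \<in> (\<Union>j\<in>(J1 \<inter> J2) - {i}. wBB p K c j)"
    then obtain j where j: "j \<in> J1" "j \<in> J2" "j \<noteq> i" "x \<in> wBB p K c j" by blast
    then show "x \<in> U1 \<inter> U2" using e1[OF j(3)] unfolding U1_def U2_def by blast
  qed
  have h1: "card (J1 \<union> J2) \<le> dim (\<Union>j\<in>J1 \<union> J2. wBB p K c j)"
  proof -
    have "J1 \<union> J2 \<subseteq> I" using J1(1) J2(1) by blast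
    then show ?thesis using h unfolding whall_def by blast
  qed
  have h2: "card ((J1 \<inter> J2) - {i}) \<le> dim (\<Union>j\<in>(J1 \<inter> J2) - {i}. wBB p K c j)"
  proof -
    have "(J1 \<inter> J2) - {i} \<subseteq> I" using J1(1) by blast
    then show ?thesis using h unfolding whall_def by blast
  qed
  have m1: "dim (\<Union>j\<in>J1 \<union> J2. wBB p K c j) \<le> dim (U1 \<union> U2)"
    using fU by (intro dim_mono_fin[OF _ s1]) auto
  have m2: "dim (\<Union>j\<in>(J1 \<inter> J2) - {i}. wBB p K c j) \<le> dim (U1 \<inter> U2)"
    using fU by (intro dim_mono_fin[OF _ s2]) auto
  have sm: "dim (U1 \<union> U2) + dim (U1 \<inter> U2) \<le> dim U1 + dim U2"
    by (rule dim_submod[OF fU])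
  have c1: "card (J1 \<union> J2) + card (J1 \<inter> J2) = card J1 + card J2"
    by (rule card_Un_Int[OF fJ, symmetric])
  have c2: "card ((J1 \<inter> J2) - {i}) = card (J1 \<inter> J2) - 1"
    using iJ1 iJ2 by simp
  have c3: "card (J1 \<inter> J2) \<ge> 1"
  proof -
    have "finite (J1 \<inter> J2)" "i \<in> J1 \<inter> J2" using fJ iJ1 iJ2 by auto
    then have "card (J1 \<inter> J2) > 0" using card_gt_0_iff by blast
    then show ?thesis by simp
  qed
  have d1: "dim U1 < card J1" using J1(2) unfolding U1_def .
  have d2: "dim U2 < card J2" using J2(2) unfolding U2_def .
  show False using d1 d2 h1 h2 m1 m2 sm c1 c2 c3 by linarith
qed

lemma hall_full:
  fixes p :: "nat \<Rightarrow> 'b \<times> 'b"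
  assumes I: "finite I" and "K \<subseteq> I" and "whall scale p I K c"
  shows "\<exists>c'. card I \<le> dim ((\<lambda>i. if c' i then fst (p i) else snd (p i)) ` I)"
  using assms
proof (induction "card (I - K)" arbitrary: K c)
  case 0
  then have "I - K = {}" using I by simp
  then have KI: "K = I" using 0 by auto
  have "(\<Union>j\<in>I. wBB p K c j) = (\<lambda>i. if c i then fst (p i) else snd (p i)) ` I"
    using KI by (auto simp: wBB_def)
  then show ?case using 0 unfolding whall_def by (metis order_refl)
next
  case (Suc m)
  then have "I - K \<noteq> {}" by (metis card.empty nat.distinct(1))
  then obtain i where i: "i \<in> I" "i \<notin> K" by blast
  obtain b where b: "whall scale p I (insert i K) (c(i:=b))" using hall_step[OF I Suc.prems(2) i Suc.prems(3)] by blast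
  have "m = card (I - insert i K)"
  proof -
    have "I - insert i K = (I - K) - {i}" by auto
    moreover have "i \<in> I - K" using i by auto
    ultimately show ?thesis using Suc.hyps(2) I by simp
  qed
  moreover have "insert i K \<subseteq> I" using i Suc.prems(2) by auto
  ultimately show ?case using Suc.hyps(1)[OF _ I _ b] by blast
qed

end

theorem theorem1:
  fixes scale :: "'a::field \<Rightarrow> 'b::ab_group_add \<Rightarrow> 'b"
    and p :: "nat \<Rightarrow> 'b \<times> 'b"
    and n :: nat
  assumes "infinite (UNIV :: 'a set)"
    and "vector_space scale"
    and "n \<ge> 1"
    and "widget_valid scale p {1..n}"
  shows "\<exists>J. J \<subseteq> {1..n} \<and> 1 \<le> card J \<and> card J < n \<and> widget_legal scale p J"
proof (rule ccontr)
  assume nc: "\<not> ?thesis"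
  interpret V: vector_space scale by (rule assms(2))
  let ?I = "{1..n::nat}"
  have legal: "widget_legal scale p ?I" and full: "widget_full scale p ?I"
    using assms(4) unfolding widget_valid_def by auto
  have whall: "whall scale p ?I {} (\<lambda>_. True)"
    unfolding whall_def
  proof (intro allI impI)
    fix J assume J: "J \<subseteq> ?I"
    have U: "(\<Union>j\<in>J. wBB p {} (\<lambda>_. True) j) = (\<Union>j\<in>J. {fst (p j), snd (p j)})"
      by (simp add: wBB_def)
    have fJ: "finite J" using finite_subset[OF J] by simp
    show "card J \<le> V.dim (\<Union>j\<in>J. wBB p {} (\<lambda>_. True) j)"
    proof (cases "J = {} \<or> J = ?I")
      case True
      then show ?thesis
      proof
        assume "J = {}" then have "card J = 0" by simp
        then show ?thesis by (simp only: le0)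
      next
        assume JI: "J = ?I"
        have "card ?I \<le> V.dim (\<Union>i\<in>?I. {fst (p i), snd (p i)})"
          using full unfolding widget_full_def .
        then show ?thesis unfolding U using JI by simp
      qed
    next
      case False
      then have "J \<subset> ?I" "J \<noteq> {}" using J by auto
      then have c0: "card J < card ?I" "card J > 0"
        using fJ psubset_card_mono[of ?I J] card_gt_0_iff[of J] by blast+
      then have c: "1 \<le> card J" "card J < n" by simp_all
      then have "\<not> widget_legal scale p J" using nc J by blast
      then obtain X where X: "X \<in> widget_sections p J" "V.dim X > card J - 1"
        unfolding widget_legal_def by (auto simp: not_le)
      have XS: "X \<subseteq> (\<Union>j\<in>J. {fst (p j), snd (p j)})"
        using X(1) unfolding widget_sections_def by auto
      have "V.dim X \<le> V.dim (\<Union>j\<in>J. {fst (p j), snd (p j)})"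
        by (rule V.dim_mono_fin[OF _ XS]) (use fJ in simp)
      then show ?thesis using X c unfolding U by linarith
    qed
  qed
  obtain c' where c': "card ?I \<le> V.dim ((\<lambda>i. if c' i then fst (p i) else snd (p i)) ` ?I)"
    using V.hall_full[OF _ _ whall] by auto
  have "(\<lambda>i. if c' i then fst (p i) else snd (p i)) ` ?I \<in> widget_sections p ?I"
    unfolding widget_sections_def by blast
  then have "V.dim ((\<lambda>i. if c' i then fst (p i) else snd (p i)) ` ?I) \<le> card ?I - 1"
    using legal unfolding widget_legal_def by blast
  then show False using c' assms(3) by simp
qed

end
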